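(* Let $0<\alpha\le 2\pi/3$ and let $u,v\in V$ with $\{u,v\}\in E$. Then either $(u,v)\in N_\alpha$, or there is a sequence $u_0,\dots,u_m$ with $u_0=u$, $u_m=v$, and for all $i=0,\dots,m-1$: $(u_i,u_{i+1})\in N_\alpha$ and $d(u_i,u_{i+1})<d(u,v)$.
   Context: Let $V$ be a finite set of pairwise distinct points (nodes) in the Euclidean plane, $d$ the Euclidean distance, and $R>0$. Let $G_R=(V,E)$ be the undirected graph with $E=\{\{u,v\}: u\neq v,\ d(u,v)\le R\}$. Fix a finite increasing sequence of radius levels $0<r_1<r_2<\dots<r_k=R$. For $u\in V$ and $1\le i\le k$ let $S_i(u)=\{v\in V\setminus\{u\}: d(u,v)\le r_i\}$. For $0<\alpha<2\pi$, a closed cone of width $\alpha$ with apex $u$ is a set $\{u+t(\cos\varphi,\sin\varphi): t\ge 0,\ \varphi\in[\theta-\alpha/2,\theta+\alpha/2]\}$ for some $\theta$. A finite set $S\subseteq V\setminus\{u\}$ has an $\alpha$-gap (at $u$) if some closed cone of width $\alpha$ with apex $u$ contains no node of $S$ (in particular $\emptyset$ has an $\alpha$-gap). The algorithm CBTC($\alpha$) assigns to each $u$ the index $i_u$ = the least $i\in\{1,\dots,k\}$ such that $S_i(u)$ has no $\alpha$-gap, or $i_u=k$ if there is no such $i$; set $N_\alpha(u)=S_{i_u}(u)$ and $N_\alpha=\{(u,v): v\in N_\alpha(u)\}$ (a directed relation, not necessarily symmetric). *)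

theory Defs
  imports "HOL-Analysis.Analysis"
begin

text \<open>The Euclidean plane is modelled by the type complex; dist is the Euclidean distance.
  Radius levels are r 1 < ... < r k (indices 1..k).\<close>

definition S_level :: "complex set \<Rightarrow> (nat \<Rightarrow> real) \<Rightarrow> nat \<Rightarrow> complex \<Rightarrow> complex set" where
  "S_level V r i u = {v \<in> V - {u}. dist u v \<le> r i}"

definition cone :: "complex \<Rightarrow> real \<Rightarrow> real \<Rightarrow> complex set" where
  "cone u \<theta> \<alpha> = {u + complex_of_real t * cis \<phi> | t \<phi>.
      t \<ge> 0 \<and> \<theta> - \<alpha>/2 \<le> \<phi> \<and> \<phi> \<le> \<theta> + \<alpha>/2}"

definition has_gap :: "real \<Rightarrow> complex \<Rightarrow> complex set \<Rightarrow> bool" where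
  "has_gap \<alpha> u S \<longleftrightarrow> (\<exists>\<theta>. cone u \<theta> \<alpha> \<inter> S = {})"

definition cbtc_index :: "complex set \<Rightarrow> (nat \<Rightarrow> real) \<Rightarrow> nat \<Rightarrow> real \<Rightarrow> complex \<Rightarrow> nat" where
  "cbtc_index V r k \<alpha> u =
     (if \<exists>i\<in>{1..k}. \<not> has_gap \<alpha> u (S_level V r i u)
      then (LEAST i. i \<in> {1..k} \<and> \<not> has_gap \<alpha> u (S_level V r i u))
      else k)"

definition N_cbtc :: "complex set \<Rightarrow> (nat \<Rightarrow> real) \<Rightarrow> nat \<Rightarrow> real \<Rightarrow> (complex \<times> complex) set" where
  "N_cbtc V r k \<alpha> = {(u, v). u \<in> V \<and> v \<in> S_level V r (cbtc_index V r k \<alpha> u) u}"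

end

theory Submission
  imports Defs
begin

lemma geo:
  fixes t c \<phi> \<theta> :: real
  assumes "0 < t" "t < c" "\<bar>\<phi> - \<theta>\<bar> \<le> pi/3"
  shows "cmod (complex_of_real t * cis \<phi> - complex_of_real c * cis \<theta>) < c"
proof -
  have n2: "(cmod (complex_of_real t * cis \<phi> - complex_of_real c * cis \<theta>))^2
     = (t * cos \<phi> - c * cos \<theta>)^2 + (t * sin \<phi> - c * sin \<theta>)^2"
    by (simp add: cmod_def)
  also have "\<dots> = t^2 * (sin \<phi>^2 + cos \<phi>^2) + c^2 * (sin \<theta>^2 + cos \<theta>^2) - 2*t*c*(cos \<phi> * cos \<theta> + sin \<phi> * sin \<theta>)"
    by algebra
  also have "\<dots> = t^2 + c^2 - 2*t*c*cos (\<phi> - \<theta>)"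
    by (simp add: cos_diff)
  finally have e: "(cmod (complex_of_real t * cis \<phi> - complex_of_real c * cis \<theta>))^2 = t^2 + c^2 - 2*t*c*cos (\<phi> - \<theta>)" .
  have "cos (pi/3) \<le> cos \<bar>\<phi> - \<theta>\<bar>"
    using assms(3) by (intro cos_monotone_0_pi_le) auto
  moreover have "cos \<bar>\<phi> - \<theta>\<bar> = cos (\<phi> - \<theta>)" by (metis abs_real_def cos_minus minus_diff_eq)
  ultimately have cg: "cos (\<phi> - \<theta>) \<ge> 1/2" by (simp add: cos_60)
  have "2*t*c*cos (\<phi> - \<theta>) \<ge> 2*t*c*(1/2)"
    using cg assms by (intro mult_left_mono) auto
  hence "(cmod (complex_of_real t * cis \<phi> - complex_of_real c * cis \<theta>))^2 < c^2"
  proof -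
    have "t*t < c*t" using assms by (intro mult_strict_right_mono) auto
    moreover have "2*t*c*(1/2) = c*t" by simp
    ultimately show ?thesis using e \<open>2*t*c*cos (\<phi> - \<theta>) \<ge> 2*t*c*(1/2)\<close> 
      by (simp only: power2_eq_square)
  qed
  from power2_less_imp_less[OF this] show ?thesis using assms by linarith
qed

lemma polar_eq:
  fixes z :: complex
  assumes "z \<noteq> 0"
  shows "z = complex_of_real (cmod z) * cis (Arg z)"
  using assms by (simp add: cis_Arg sgn_div_norm scaleR_conv_of_real)

lemma step:
  fixes V :: "complex set" and r :: "nat \<Rightarrow> real" and k :: nat and R \<alpha> :: real
    and a b :: complex
  assumes "r k = R" and "0 < \<alpha>" and "\<alpha> \<le> 2 * pi / 3"
    and "a \<in> V" and "b \<in> V" and "a \<noteq> b" and "dist a b \<le> R"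
    and "(a, b) \<notin> N_cbtc V r k \<alpha>"
  shows "\<exists>w\<in>V. (a, w) \<in> N_cbtc V r k \<alpha> \<and> dist a w < dist a b \<and> dist w b < dist a b"
proof (cases "\<exists>i\<in>{1..k}. \<not> has_gap \<alpha> a (S_level V r i a)")
  case False
  hence "cbtc_index V r k \<alpha> a = k" by (simp add: cbtc_index_def)
  hence "(a, b) \<in> N_cbtc V r k \<alpha>" using assms by (simp add: N_cbtc_def S_level_def)
  thus ?thesis using assms by simp
next
  case True
  define i where "i = cbtc_index V r k \<alpha> a"
  have i_eq: "i = (LEAST i. i \<in> {1..k} \<and> \<not> has_gap \<alpha> a (S_level V r i a))"
    using True by (simp add: i_def cbtc_index_def)
  have ng: "\<not> has_gap \<alpha> a (S_level V r i a)"
    unfolding i_eq using True by (metis (mono_tags, lifting) LeastI)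
  have bnot: "b \<notin> S_level V r i a" using assms(8) assms(4) by (simp add: N_cbtc_def i_def)
  hence rb: "r i < dist a b" using assms by (auto simp: S_level_def)
  define \<theta> where "\<theta> = Arg (b - a)"
  define c where "c = dist a b"
  have bpol: "b - a = complex_of_real c * cis \<theta>"
    unfolding c_def \<theta>_def using polar_eq[of "b - a"] assms(6) by (simp add: dist_norm norm_minus_commute)
  from ng have "cone a \<theta> \<alpha> \<inter> S_level V r i a \<noteq> {}" by (auto simp: has_gap_def)
  then obtain w where wc: "w \<in> cone a \<theta> \<alpha>" and wS: "w \<in> S_level V r i a" by blast
  from wc obtain t \<phi> where wt: "w = a + complex_of_real t * cis \<phi>" and t0: "t \<ge> 0"
    and ph: "\<theta> - \<alpha>/2 \<le> \<phi>" "\<phi> \<le> \<theta> + \<alpha>/2"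
    unfolding cone_def by blast
  have wV: "w \<in> V" "w \<noteq> a" "dist a w \<le> r i" using wS by (auto simp: S_level_def)
  have dt: "dist a w = t" using wt t0 by (simp add: dist_norm norm_mult)
  have tpos: "0 < t" using dt wV(2) t0 by (metis dist_eq_0_iff order_le_less)
  have tc: "t < c" using dt wV(3) rb c_def by linarith
  have "\<bar>\<phi> - \<theta>\<bar> \<le> pi/3" using ph assms(3) by linarith
  hence "cmod (complex_of_real t * cis \<phi> - complex_of_real c * cis \<theta>) < c"
    using geo tpos tc by blast
  moreover have "w - b = complex_of_real t * cis \<phi> - complex_of_real c * cis \<theta>"
    using wt bpol by (simp add: algebra_simps)
  ultimately have "dist w b < dist a b" by (simp add: dist_norm c_def)
  moreover have "(a, w) \<in> N_cbtc V r k \<alpha>" using wS assms(4) by (simp add: N_cbtc_def i_def)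
  ultimately show ?thesis using wV dt tc c_def by auto
qed

theorem lemma2:
  fixes V :: "complex set" and r :: "nat \<Rightarrow> real" and k :: nat and R \<alpha> :: real
    and u v :: complex
  assumes "finite V" and "R > 0"
    and "k \<ge> 1" and "0 < r 1" and "\<And>i j. 1 \<le> i \<Longrightarrow> i < j \<Longrightarrow> j \<le> k \<Longrightarrow> r i < r j"
    and "r k = R"
    and "0 < \<alpha>" and "\<alpha> \<le> 2 * pi / 3"
    and "u \<in> V" and "v \<in> V" and "u \<noteq> v" and "dist u v \<le> R"
  shows "(u, v) \<in> N_cbtc V r k \<alpha> \<or>
    (\<exists>(us :: nat \<Rightarrow> complex) m. us 0 = u \<and> us m = v \<and>
       (\<forall>i<m. (us i, us (Suc i)) \<in> N_cbtc V r k \<alpha> \<and> dist (us i) (us (Suc i)) < dist u v))"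
proof -
  let ?N = "N_cbtc V r k \<alpha>"
  let ?C = "\<lambda>a b. card {p \<in> V \<times> V. dist (fst p) (snd p) < dist a b}"
  have main: "\<And>a b. ?C a b = n \<Longrightarrow> a \<in> V \<Longrightarrow> b \<in> V \<Longrightarrow> a \<noteq> b \<Longrightarrow> dist a b \<le> R \<Longrightarrow>
     (a, b) \<in> ?N \<or> (\<exists>(us :: nat \<Rightarrow> complex) m. us 0 = a \<and> us m = b \<and>
       (\<forall>i<m. (us i, us (Suc i)) \<in> ?N \<and> dist (us i) (us (Suc i)) < dist a b))" for n
  proof (induction n rule: less_induct)
    case (less n a b)
    show ?case
    proof (cases "(a, b) \<in> ?N")
      case True thus ?thesis by simp
    next
      case False
      obtain w where w: "w \<in> V" "(a, w) \<in> ?N" "dist a w < dist a b" "dist w b < dist a b"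
        using step[of r k R \<alpha> a V b] less.prems False assms by blast
      have wb: "w \<noteq> b" using w(3) by auto
      have sub: "{p \<in> V \<times> V. dist (fst p) (snd p) < dist w b} \<subset> {p \<in> V \<times> V. dist (fst p) (snd p) < dist a b}"
      proof -
        have "(w, b) \<in> {p \<in> V \<times> V. dist (fst p) (snd p) < dist a b}"
             "(w, b) \<notin> {p \<in> V \<times> V. dist (fst p) (snd p) < dist w b}"
          using w less.prems by auto
        moreover have "{p \<in> V \<times> V. dist (fst p) (snd p) < dist w b} \<subseteq> {p \<in> V \<times> V. dist (fst p) (snd p) < dist a b}"
          using w by auto
        ultimately show ?thesis by blast
      qed
      have "?C w b < n" unfolding less.prems(1)[symmetric]
        by (rule psubset_card_mono) (use sub assms(1) in auto)
      have "dist w b \<le> R" using w(4) less.prems(5) by linarith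
      from less.IH[OF \<open>?C w b < n\<close> refl w(1) less.prems(3) wb this]
      have IH: "(w, b) \<in> ?N \<or> (\<exists>(us :: nat \<Rightarrow> complex) m. us 0 = w \<and> us m = b \<and>
       (\<forall>i<m. (us i, us (Suc i)) \<in> ?N \<and> dist (us i) (us (Suc i)) < dist w b))" .
      have "\<exists>(us :: nat \<Rightarrow> complex) m. us 0 = a \<and> us m = b \<and>
       (\<forall>i<m. (us i, us (Suc i)) \<in> ?N \<and> dist (us i) (us (Suc i)) < dist a b)"
        using IH
      proof
        assume h: "(w, b) \<in> ?N"
        let ?us = "\<lambda>i::nat. if i = 0 then a else if i = 1 then w else b"
        have "\<forall>i<2. (?us i, ?us (Suc i)) \<in> ?N \<and> dist (?us i) (?us (Suc i)) < dist a b"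
        proof (intro allI impI)
          fix i :: nat assume "i < 2"
          hence "i = 0 \<or> i = 1" by auto
          thus "(?us i, ?us (Suc i)) \<in> ?N \<and> dist (?us i) (?us (Suc i)) < dist a b"
            using h w by auto
        qed
        thus ?thesis by (intro exI[of _ ?us] exI[of _ 2]) auto
      next
        assume "\<exists>(us :: nat \<Rightarrow> complex) m. us 0 = w \<and> us m = b \<and>
          (\<forall>i<m. (us i, us (Suc i)) \<in> ?N \<and> dist (us i) (us (Suc i)) < dist w b)"
        then obtain us m where us: "us 0 = w" "us m = b"
          "\<forall>i<m. (us i, us (Suc i)) \<in> ?N \<and> dist (us i) (us (Suc i)) < dist w b" by blast
        let ?vs = "\<lambda>i::nat. if i = 0 then a else us (i - 1)"
        have "\<forall>i<Suc m. (?vs i, ?vs (Suc i)) \<in> ?N \<and> dist (?vs i) (?vs (Suc i)) < dist a b"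
        proof (intro allI impI)
          fix i :: nat assume i: "i < Suc m"
          show "(?vs i, ?vs (Suc i)) \<in> ?N \<and> dist (?vs i) (?vs (Suc i)) < dist a b"
          proof (cases i)
            case 0 thus ?thesis using us w by auto
          next
            case (Suc j)
            hence "j < m" using i by auto
            thus ?thesis using us(3) w(4) Suc by fastforce
          qed
        qed
        thus ?thesis using us by (intro exI[of _ ?vs] exI[of _ "Suc m"]) auto
      qed
      thus ?thesis by blast
    qed
  qed
  show ?thesis using main[OF refl] assms by blast
qed

end
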